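(* Let $G$ be a connected triangle-free graph with no full star-cutset which is not a path on at most $4$ vertices. Then every subdivision $G^*$ of $G$ is a connected triangle-free graph with no full star-cutset.
   Context: A full star-cutset of a connected graph $G$ is a set $N[u]=\{u\}\cup N(u)$ whose removal disconnects $G$. A subdivision of a graph is obtained by replacing edges by paths. *)

theory Defs
  imports Main
begin

definition graph :: "'a set \<Rightarrow> 'a set set \<Rightarrow> bool" where
  "graph V E \<longleftrightarrow> finite V \<and> (\<forall>e\<in>E. \<exists>x y. x \<noteq> y \<and> x \<in> V \<and> y \<in> V \<and> e = {x, y})"

definition adj :: "'a set set \<Rightarrow> 'a \<Rightarrow> 'a \<Rightarrow> bool" where
  "adj E x y \<longleftrightarrow> {x, y} \<in> E \<and> x \<noteq> y"

definition induced_edges :: "'a set set \<Rightarrow> 'a set \<Rightarrow> 'a set set" where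
  "induced_edges E S = {e \<in> E. e \<subseteq> S}"

definition connected_graph :: "'a set \<Rightarrow> 'a set set \<Rightarrow> bool" where
  "connected_graph V E \<longleftrightarrow> V \<noteq> {} \<and> (\<forall>x\<in>V. \<forall>y\<in>V. (adj E)\<^sup>*\<^sup>* x y)"

text \<open>Disconnected: there are two vertices not joined by any walk
  (so the empty graph is not disconnected).\<close>
definition disconnected_graph :: "'a set \<Rightarrow> 'a set set \<Rightarrow> bool" where
  "disconnected_graph V E \<longleftrightarrow> (\<exists>x\<in>V. \<exists>y\<in>V. \<not> (adj E)\<^sup>*\<^sup>* x y)"

definition triangle_free :: "'a set \<Rightarrow> 'a set set \<Rightarrow> bool" where
  "triangle_free V E \<longleftrightarrow> \<not> (\<exists>x\<in>V. \<exists>y\<in>V. \<exists>z\<in>V. adj E x y \<and> adj E y z \<and> adj E x z)"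

definition closed_nbhd :: "'a set \<Rightarrow> 'a set set \<Rightarrow> 'a \<Rightarrow> 'a set" where
  "closed_nbhd V E u = insert u {v \<in> V. adj E u v}"

definition full_star_cutset :: "'a set \<Rightarrow> 'a set set \<Rightarrow> 'a set \<Rightarrow> bool" where
  "full_star_cutset V E S \<longleftrightarrow> (\<exists>u\<in>V. S = closed_nbhd V E u \<and>
      disconnected_graph (V - S) (induced_edges E (V - S)))"

definition has_full_star_cutset :: "'a set \<Rightarrow> 'a set set \<Rightarrow> bool" where
  "has_full_star_cutset V E \<longleftrightarrow> (\<exists>S. full_star_cutset V E S)"

definition is_path_graph :: "'a set \<Rightarrow> 'a set set \<Rightarrow> bool" where
  "is_path_graph V E \<longleftrightarrow> (\<exists>xs. xs \<noteq> [] \<and> distinct xs \<and> set xs = V \<and>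
      E = {{xs ! i, xs ! Suc i} | i. Suc i < length xs})"

inductive subdivision :: "'a set \<Rightarrow> 'a set set \<Rightarrow> 'a set \<Rightarrow> 'a set set \<Rightarrow> bool"
  for V E where
  refl: "subdivision V E V E"
| step: "subdivision V E V' E' \<Longrightarrow> {u, v} \<in> E' \<Longrightarrow> u \<noteq> v \<Longrightarrow> w \<notin> V' \<Longrightarrow>
         subdivision V E (insert w V') ((E' - {{u, v}}) \<union> {{u, w}, {w, v}})"

end

theory Submission
  imports Defs
begin


lemma adj_sym: "adj E x y \<longleftrightarrow> adj E y x"
  by (auto simp: adj_def insert_commute)

lemma adj_irrefl: "\<not> adj E x x"
  by (simp add: adj_def)

lemma adj_induced: "adj (induced_edges E T) a b \<longleftrightarrow> adj E a b \<and> a \<in> T \<and> b \<in> T"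
  by (auto simp: adj_def induced_edges_def)

lemma graph_adjD: "graph V E \<Longrightarrow> adj E x y \<Longrightarrow> x \<in> V \<and> y \<in> V"
  unfolding graph_def adj_def by (fastforce simp: doubleton_eq_iff)

lemma rtranclp_lift:
  assumes "\<And>a b. P a b \<Longrightarrow> Q\<^sup>*\<^sup>* a b" "P\<^sup>*\<^sup>* x y"
  shows "Q\<^sup>*\<^sup>* x y"
  using assms(2) by induction (auto intro: rtranclp_trans assms(1))

lemma rtranclp_closed:
  assumes "P\<^sup>*\<^sup>* x y" "x \<in> S" "\<And>a b. a \<in> S \<Longrightarrow> P a b \<Longrightarrow> b \<in> S"
  shows "y \<in> S"
  using assms(1,2) by induction (auto intro: assms(3))

lemma rtranclp_symm:
  assumes "\<And>a b. P a b \<Longrightarrow> P b a" "P\<^sup>*\<^sup>* x y" shows "P\<^sup>*\<^sup>* y x"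
  using assms(2) by induction (auto intro: converse_rtranclp_into_rtranclp assms(1))

lemma ind_symm: "(adj (induced_edges E T))\<^sup>*\<^sup>* x y \<Longrightarrow> (adj (induced_edges E T))\<^sup>*\<^sup>* y x"
  by (rule rtranclp_symm[where P="adj (induced_edges E T)"]) (auto simp: adj_induced adj_sym)

lemma conn_mono: "T \<subseteq> T' \<Longrightarrow> (adj (induced_edges E T))\<^sup>*\<^sup>* a b \<Longrightarrow> (adj (induced_edges E T'))\<^sup>*\<^sup>* a b"
  by (rule rtranclp_lift[where P="adj (induced_edges E T)"]) (auto simp: adj_induced intro!: r_into_rtranclp)

lemma nsc_iff: "\<not> has_full_star_cutset V E \<longleftrightarrow> (\<forall>x\<in>V. \<forall>a\<in>V - closed_nbhd V E x. \<forall>b\<in>V - closed_nbhd V E x.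
   (adj (induced_edges E (V - closed_nbhd V E x)))\<^sup>*\<^sup>* a b)"
  by (auto simp: has_full_star_cutset_def full_star_cutset_def disconnected_graph_def)

lemma cn_iff: "y \<in> closed_nbhd V E x \<longleftrightarrow> y = x \<or> (y \<in> V \<and> adj E x y)"
  by (auto simp: closed_nbhd_def)

definition cedges :: "'a list \<Rightarrow> 'a set set" where
  "cedges xs = {{xs ! i, xs ! Suc i} | i. Suc i < length xs}"

lemma cedges_Cons2: "cedges (x # y # xs) = insert {x,y} (cedges (y # xs))"
proof (rule set_eqI, rule iffI)
  fix e assume "e \<in> cedges (x # y # xs)"
  then obtain i where i: "Suc i < length (x#y#xs)" "e = {(x#y#xs) ! i, (x#y#xs) ! Suc i}"
    by (auto simp: cedges_def)
  show "e \<in> insert {x,y} (cedges (y # xs))"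
  proof (cases i)
    case 0 then show ?thesis using i by simp
  next
    case (Suc j) then show ?thesis using i unfolding cedges_def by auto
  qed
next
  fix e assume "e \<in> insert {x,y} (cedges (y # xs))"
  then consider "e = {x,y}" | i where "Suc i < length (y#xs)" "e = {(y#xs) ! i, (y#xs) ! Suc i}"
    by (auto simp: cedges_def)
  then show "e \<in> cedges (x # y # xs)"
  proof cases
    case 1 then show ?thesis unfolding cedges_def by (intro CollectI exI[of _ 0]) auto
  next
    case (2 i) then show ?thesis unfolding cedges_def by (intro CollectI exI[of _ "Suc i"]) auto
  qed
qed

lemma cedges_single: "cedges [x] = {}"
  by (simp add: cedges_def)

lemma path_from_list:
  assumes g: "graph V E" and s: "set xs = V" and d: "distinct xs" and ne: "xs \<noteq> []"
    and a: "\<And>x y. x \<in> V \<Longrightarrow> y \<in> V \<Longrightarrow> adj E x y \<longleftrightarrow> {x,y} \<in> cedges xs"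
  shows "is_path_graph V E"
proof -
  have "E = cedges xs"
  proof
    show "E \<subseteq> cedges xs"
    proof
      fix e assume e: "e \<in> E"
      then obtain x y where "x \<noteq> y" "x \<in> V" "y \<in> V" "e = {x,y}" using g unfolding graph_def by blast
      then show "e \<in> cedges xs" using a e by (auto simp: adj_def)
    qed
  next
    show "cedges xs \<subseteq> E"
    proof
      fix e assume "e \<in> cedges xs"
      then obtain i where i: "Suc i < length xs" "e = {xs ! i, xs ! Suc i}" by (auto simp: cedges_def)
      have "xs ! i \<in> V" "xs ! Suc i \<in> V" using i s by auto
      moreover have "{xs ! i, xs ! Suc i} \<in> cedges xs" using i by (auto simp: cedges_def)
      ultimately show "e \<in> E" using a i by (auto simp: adj_def)
    qed
  qed
  then show ?thesis unfolding is_path_graph_def cedges_def using s d ne by blast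
qed

lemma path4:
  assumes g: "graph V E" and V: "V = {p,q,r,s}" and d: "distinct [p,q,r,s]"
    and "adj E p q" "adj E q r" "adj E r s" "\<not> adj E p r" "\<not> adj E p s" "\<not> adj E q s"
  shows "is_path_graph V E \<and> card V \<le> 4"
proof
  show "is_path_graph V E"
    apply (rule path_from_list[OF g, of "[p,q,r,s]"])
    using assms by (auto simp: cedges_Cons2 cedges_single doubleton_eq_iff adj_irrefl adj_sym)
  show "card V \<le> 4" using V card_insert_le[of "{q,r,s}" p] d by auto
qed

lemma path3:
  assumes g: "graph V E" and V: "V = {p,q,r}" and d: "distinct [p,q,r]"
    and "adj E p q" "adj E q r" "\<not> adj E p r"
  shows "is_path_graph V E"
    apply (rule path_from_list[OF g, of "[p,q,r]"])
    using assms by (auto simp: cedges_Cons2 cedges_single doubleton_eq_iff adj_irrefl adj_sym)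

lemma path2:
  assumes g: "graph V E" and V: "V = {p,q}" and d: "p \<noteq> q" and "adj E p q"
  shows "is_path_graph V E"
    apply (rule path_from_list[OF g, of "[p,q]"])
    using assms by (auto simp: cedges_Cons2 cedges_single doubleton_eq_iff adj_irrefl adj_sym)

lemma path1:
  assumes g: "graph V E" and V: "V = {p}"
  shows "is_path_graph V E"
    apply (rule path_from_list[OF g, of "[p]"])
    using assms by (auto simp: cedges_single adj_irrefl)

lemma has_nbr: "(adj E)\<^sup>*\<^sup>* x y \<Longrightarrow> x \<noteq> y \<Longrightarrow> \<exists>z. adj E x z"
  by (erule converse_rtranclpE) auto

lemma small_path:
  assumes g: "graph V E" and c: "connected_graph V E" and tf: "triangle_free V E" and k: "card V \<le> 3"
  shows "is_path_graph V E \<and> card V \<le> 4"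
proof -
  have fin: "finite V" using g by (simp add: graph_def)
  have ne: "V \<noteq> {}" using c by (simp add: connected_graph_def)
  have conn: "\<And>x y. x \<in> V \<Longrightarrow> y \<in> V \<Longrightarrow> (adj E)\<^sup>*\<^sup>* x y" using c by (simp add: connected_graph_def)
  have nb: "\<And>x y. x \<in> V \<Longrightarrow> y \<in> V \<Longrightarrow> x \<noteq> y \<Longrightarrow> \<exists>z\<in>V. adj E x z"
    using conn has_nbr graph_adjD[OF g] by metis
  have "card V = 1 \<or> card V = 2 \<or> card V = 3" using k ne fin by (cases "card V") auto
  then have "is_path_graph V E"
  proof (elim disjE)
    assume "card V = 1" then show ?thesis using path1[OF g] by (auto simp: card_1_singleton_iff)
  next
    assume "card V = 2"
    then obtain x y where V: "V = {x,y}" "x \<noteq> y" by (auto simp: card_2_iff)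
    then have "adj E x y" using nb[of x y] by (auto simp: adj_irrefl)
    then show ?thesis using path2[OF g V] by auto
  next
    assume "card V = 3"
    then obtain x y z where V: "V = {x,y,z}" "x \<noteq> y" "y \<noteq> z" "x \<noteq> z" by (auto simp: card_3_iff)
    have n1: "adj E x y \<or> adj E x z" using nb[of x y] V by (auto simp: adj_irrefl)
    have n2: "adj E x y \<or> adj E y z" using nb[of y x] V by (auto simp: adj_irrefl adj_sym)
    have n3: "adj E x z \<or> adj E y z" using nb[of z x] V by (auto simp: adj_irrefl adj_sym)
    have t: "\<not> (adj E x y \<and> adj E y z \<and> adj E x z)" using tf V by (auto simp: triangle_free_def)
    show ?thesis
    proof (cases "adj E x y")
      case True
      show ?thesis
      proof (cases "adj E y z")
        case True
        then show ?thesis using path3[OF g V(1)] V \<open>adj E x y\<close> t by auto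
      next
        case False
        then have "adj E x z" using n3 by auto
        then show ?thesis using path3[OF g, of y x z] V \<open>adj E x y\<close> False
          by (auto simp: adj_sym insert_commute)
      qed
    next
      case False
      then have "adj E x z" "adj E y z" using n1 n2 by auto
      then show ?thesis using path3[OF g, of x z y] V False
        by (auto simp: adj_sym insert_commute)
    qed
  qed
  then show ?thesis using k by simp
qed



definition good :: "'a set \<Rightarrow> 'a set set \<Rightarrow> bool" where
  "good V E \<longleftrightarrow> graph V E \<and> connected_graph V E \<and> triangle_free V E \<and>
     \<not> has_full_star_cutset V E \<and> \<not> (is_path_graph V E \<and> card V \<le> 4)"

lemma tfD: "graph V E \<Longrightarrow> triangle_free V E \<Longrightarrow> adj E x y \<Longrightarrow> adj E y z \<Longrightarrow> adj E x z \<Longrightarrow> False"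
  unfolding triangle_free_def using graph_adjD by metis

lemma cross:
  assumes G: "good V E" and uv: "adj E u v" and a: "a \<in> V - closed_nbhd V E u"
    and b: "b \<in> V - closed_nbhd V E v"
  shows "(adj (induced_edges E (V - {u,v})))\<^sup>*\<^sup>* a b"
proof -
  have g: "graph V E" and tf: "triangle_free V E"
    and nsc: "\<not> has_full_star_cutset V E" and np: "\<not> (is_path_graph V E \<and> card V \<le> 4)"
    using G by (auto simp: good_def)
  have uV: "u \<in> V" "v \<in> V" using graph_adjD[OF g uv] by auto
  note nsc' = nsc[unfolded nsc_iff, rule_format]
  let ?T = "V - {u,v}"
  let ?Nu = "closed_nbhd V E u" and ?Nv = "closed_nbhd V E v"
  have su: "V - ?Nu \<subseteq> ?T" using uv by (auto simp: cn_iff)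
  have sv: "V - ?Nv \<subseteq> ?T" using uv by (auto simp: cn_iff adj_sym)
  have cu: "(adj (induced_edges E ?T))\<^sup>*\<^sup>* x y" if "x \<in> V - ?Nu" "y \<in> V - ?Nu" for x y
    using conn_mono[OF su nsc'[OF uV(1) that]] .
  have cv: "(adj (induced_edges E ?T))\<^sup>*\<^sup>* x y" if "x \<in> V - ?Nv" "y \<in> V - ?Nv" for x y
    using conn_mono[OF sv nsc'[OF uV(2) that]] .
  show ?thesis
  proof (cases "\<exists>r. r \<in> V - ?Nu \<and> r \<in> V - ?Nv")
    case True
    then obtain r where r: "r \<in> V - ?Nu" "r \<in> V - ?Nv" by blast
    show ?thesis using cu[OF a r(1)] cv[OF r(2) b] by (rule rtranclp_trans)
  next
    case noR: False
    show ?thesis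
    proof (cases "a \<in> V - ?Nv \<or> b \<in> V - ?Nu")
      case True then show ?thesis using cu cv a b by blast
    next
      case False
      then have av: "adj E v a" and bu: "adj E u b" using a b uv by (auto simp: cn_iff adj_sym)
      have aV: "a \<in> V" "b \<in> V" using a b by auto
      have A1: "y = a" if y: "y \<in> V - ?Nu" for y
      proof -
        have "(adj (induced_edges E (V - ?Nu)))\<^sup>*\<^sup>* a y" using nsc'[OF uV(1) a y] .
        then show ?thesis
        proof (rule rtranclp_closed[where S="{a}", simplified])
          fix y' assume "adj (induced_edges E (V - ?Nu)) a y'"
          then have y': "adj E a y'" "y' \<in> V - ?Nu" by (auto simp: adj_induced)
          then have "adj E v y'" using noR uv graph_adjD[OF g y'(1)] by (auto simp: cn_iff adj_sym)
          then show "y' = a" using tfD[OF g tf av y'(1)] by (auto simp: adj_sym)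
        qed simp
      qed
      have B1: "y = b" if y: "y \<in> V - ?Nv" for y
      proof -
        have "(adj (induced_edges E (V - ?Nv)))\<^sup>*\<^sup>* b y" using nsc'[OF uV(2) b y] .
        then show ?thesis
        proof (rule rtranclp_closed[where S="{b}", simplified])
          fix y' assume "adj (induced_edges E (V - ?Nv)) b y'"
          then have y': "adj E b y'" "y' \<in> V - ?Nv" by (auto simp: adj_induced)
          then have "adj E u y'" using noR uv graph_adjD[OF g y'(1)] by (auto simp: cn_iff adj_sym)
          then show "y' = b" using tfD[OF g tf bu y'(1)] by (auto simp: adj_sym)
        qed simp
      qed
      show ?thesis
      proof (cases "adj E a b")
        case True
        then show ?thesis using a b su sv by (auto simp: adj_induced intro!: r_into_rtranclp)
      next
        case nab: False
        have V: "V = {b,u,v,a}"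
        proof
          show "{b,u,v,a} \<subseteq> V" using uV aV by auto
          show "V \<subseteq> {b,u,v,a}"
          proof
            fix x assume x: "x \<in> V"
            show "x \<in> {b,u,v,a}"
            proof (cases "x \<in> ?Nu")
              case False then show ?thesis using A1 x by auto
            next
              case True
              then have "x = u \<or> adj E u x" by (auto simp: cn_iff)
              moreover have "x \<in> ?Nv \<Longrightarrow> x = v \<or> adj E v x" by (auto simp: cn_iff)
              ultimately show ?thesis using B1 x tfD[OF g tf uv, of x] by (auto simp: adj_sym)
            qed
          qed
        qed
        have "is_path_graph V E \<and> card V \<le> 4"
          apply (rule path4[OF g V])
          using uv av bu nab a b by (auto simp: adj_sym cn_iff adj_irrefl)
        with np show ?thesis by blast
      qed
    qed
  qed
qed

lemma edge_removal:
  assumes G: "good V E" and uv: "adj E u v" and a: "a \<in> V - {u,v}" and b: "b \<in> V - {u,v}"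
  shows "(adj (induced_edges E (V - {u,v})))\<^sup>*\<^sup>* a b"
proof -
  have g: "graph V E" and tf: "triangle_free V E"
    and nsc: "\<not> has_full_star_cutset V E" using G by (auto simp: good_def)
  note nsc' = nsc[unfolded nsc_iff, rule_format]
  have uV: "u \<in> V" "v \<in> V" using graph_adjD[OF g uv] by auto
  have cover: "x \<in> V - closed_nbhd V E u \<or> x \<in> V - closed_nbhd V E v" if "x \<in> V - {u,v}" for x
    using that tfD[OF g tf uv, of x] by (auto simp: cn_iff adj_sym)
  have vu: "adj E v u" using uv by (simp add: adj_sym)
  have e: "V - {v,u} = V - {u,v}" by auto
  have su: "V - closed_nbhd V E u \<subseteq> V - {u,v}" using uv by (auto simp: cn_iff)
  have sv: "V - closed_nbhd V E v \<subseteq> V - {u,v}" using uv by (auto simp: cn_iff adj_sym)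
  from cover[OF a] show ?thesis
  proof
    assume au: "a \<in> V - closed_nbhd V E u"
    from cover[OF b] show ?thesis
    proof
      assume "b \<in> V - closed_nbhd V E u"
      then show ?thesis using conn_mono[OF su nsc'[OF uV(1) au]] by blast
    next
      assume "b \<in> V - closed_nbhd V E v"
      then show ?thesis using cross[OF G uv au] by blast
    qed
  next
    assume av: "a \<in> V - closed_nbhd V E v"
    from cover[OF b] show ?thesis
    proof
      assume "b \<in> V - closed_nbhd V E v"
      then show ?thesis using conn_mono[OF sv nsc'[OF uV(2) av]] by blast
    next
      assume "b \<in> V - closed_nbhd V E u"
      then show ?thesis using cross[OF G vu av] unfolding e by blast
    qed
  qed
qed



lemma leaf:
  assumes G: "good V E" and uv: "adj E u v" and lf: "\<And>y. adj E v y \<Longrightarrow> y = u"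
  shows "V \<subseteq> closed_nbhd V E u"
proof (rule ccontr)
  assume "\<not> V \<subseteq> closed_nbhd V E u"
  then obtain r where r: "r \<in> V" "r \<notin> closed_nbhd V E u" by blast
  have g: "graph V E" and tf: "triangle_free V E" and c: "connected_graph V E"
    and nsc: "\<not> has_full_star_cutset V E" and np: "\<not> (is_path_graph V E \<and> card V \<le> 4)"
    using G by (auto simp: good_def)
  note nsc' = nsc[unfolded nsc_iff, rule_format]
  have uV: "u \<in> V" "v \<in> V" using graph_adjD[OF g uv] by auto
  have rv: "r \<noteq> v" "r \<noteq> u" "\<not> adj E u r" using r uv uV by (auto simp: cn_iff)
  obtain a where ua: "adj E u a" "a \<noteq> v"
  proof (rule ccontr)
    assume "\<not> thesis"
    then have nA: "\<And>y. adj E u y \<Longrightarrow> y = v" using that by blast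
    have "(adj E)\<^sup>*\<^sup>* u r" using c uV r by (auto simp: connected_graph_def)
    then have "r \<in> {u,v}"
      by (rule rtranclp_closed) (auto dest: nA lf)
    then show False using rv by auto
  qed
  have aV: "a \<in> V" using graph_adjD[OF g ua(1)] by auto
  have au: "a \<noteq> u" using ua by (auto simp: adj_def)
  have NA: "y \<in> closed_nbhd V E a'" if a': "adj E u a'" "a' \<noteq> v" and y: "y \<in> V" "y \<noteq> v" for a' y
  proof (rule ccontr)
    assume yn: "y \<notin> closed_nbhd V E a'"
    have a'u: "a' \<noteq> u" using a' by (auto simp: adj_def)
    have vin: "v \<in> V - closed_nbhd V E a'"
      using uV a' lf[of a'] a'u by (auto simp: cn_iff adj_sym)
    have a'V: "a' \<in> V" using graph_adjD[OF g a'(1)] by auto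
    have "(adj (induced_edges E (V - closed_nbhd V E a')))\<^sup>*\<^sup>* v y"
      using nsc'[OF a'V vin] y yn by auto
    then have "y \<in> {v}"
    proof (rule rtranclp_closed)
      fix p q assume "p \<in> {v}" "adj (induced_edges E (V - closed_nbhd V E a')) p q"
      then have "q = u" "q \<notin> closed_nbhd V E a'" using lf by (auto simp: adj_induced)
      then show "q \<in> {v}" using a' uV by (auto simp: cn_iff adj_sym)
    qed simp
    then show False using y by auto
  qed
  have A1: "a' = a" if "adj E u a'" "a' \<noteq> v" for a'
  proof (rule ccontr)
    assume ne: "a' \<noteq> a"
    have "a' \<in> V" using graph_adjD[OF g that(1)] by auto
    then have "adj E a a'" using NA[OF ua, of a'] that ne by (auto simp: cn_iff)
    then show False using tfD[OF g tf ua(1) _ that(1)] by blast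
  qed
  have ar: "adj E a r" using NA[OF ua r(1) rv(1)] r ua by (auto simp: cn_iff)
  have R1: "y = r" if y: "y \<in> V - closed_nbhd V E u" for y
  proof -
    have "(adj (induced_edges E (V - closed_nbhd V E u)))\<^sup>*\<^sup>* r y" using nsc'[OF uV(1) _ y] r by auto
    then have "y \<in> {r}"
    proof (rule rtranclp_closed)
      fix p q assume "p \<in> {r}" "adj (induced_edges E (V - closed_nbhd V E u)) p q"
      then have pq: "p = r" "adj E r q" "q \<in> V - closed_nbhd V E u" by (auto simp: adj_induced)
      then have "q \<noteq> v" "q \<noteq> a" using uv ua by (auto simp: cn_iff)
      then have "adj E a q" using NA[OF ua, of q] pq by (auto simp: cn_iff)
      then show "q \<in> {r}" using tfD[OF g tf ar pq(2)] by blast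
    qed simp
    then show ?thesis by simp
  qed
  have V: "V = {v,u,a,r}"
  proof
    show "{v,u,a,r} \<subseteq> V" using uV aV r by auto
    show "V \<subseteq> {v,u,a,r}"
    proof
      fix x assume x: "x \<in> V"
      show "x \<in> {v,u,a,r}"
      proof (cases "x \<in> closed_nbhd V E u")
        case False then show ?thesis using R1 x by auto
      next
        case True then show ?thesis using A1[of x] by (auto simp: cn_iff)
      qed
    qed
  qed
  have "is_path_graph V E \<and> card V \<le> 4"
    apply (rule path4[OF g V])
    using uv ua ar rv au lf[of a] lf[of r] by (auto simp: adj_sym adj_irrefl)
  with np show False by blast
qed

lemma after_u:
  assumes G: "good V E" and uv: "adj E u v"
    and x: "x \<in> insert v (V - closed_nbhd V E u)" and y: "y \<in> insert v (V - closed_nbhd V E u)"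
  shows "(adj (induced_edges E (insert v (V - closed_nbhd V E u))))\<^sup>*\<^sup>* x y"
proof -
  have g: "graph V E" and tf: "triangle_free V E"
    and nsc: "\<not> has_full_star_cutset V E" using G by (auto simp: good_def)
  note nsc' = nsc[unfolded nsc_iff, rule_format]
  have uV: "u \<in> V" "v \<in> V" using graph_adjD[OF g uv] by auto
  let ?T = "insert v (V - closed_nbhd V E u)"
  show ?thesis
  proof (cases "\<exists>b. adj E v b \<and> b \<noteq> u")
    case True
    then obtain b where b: "adj E v b" "b \<noteq> u" by blast
    have bT: "b \<in> V - closed_nbhd V E u"
      using b graph_adjD[OF g b(1)] tfD[OF g tf uv b(1)] by (auto simp: cn_iff)
    have tov: "(adj (induced_edges E ?T))\<^sup>*\<^sup>* z v" if z: "z \<in> ?T" for z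
    proof (cases "z = v")
      case True then show ?thesis by simp
    next
      case False
      then have zz: "z \<in> V - closed_nbhd V E u" using z by auto
      have "(adj (induced_edges E ?T))\<^sup>*\<^sup>* z b"
        using conn_mono[OF _ nsc'[OF uV(1) zz bT], of ?T] by blast
      moreover have "adj (induced_edges E ?T) b v" using b bT by (auto simp: adj_induced adj_sym)
      ultimately show ?thesis by (rule rtranclp.rtrancl_into_rtrancl)
    qed
    show ?thesis using tov[OF x] ind_symm[OF tov[OF y]] by (rule rtranclp_trans)
  next
    case False
    then have "V \<subseteq> closed_nbhd V E u" using leaf[OF G uv] by blast
    then have "x = v" "y = v" using x y by auto
    then show ?thesis by simp
  qed
qed



locale sstep =
  fixes V :: "'a set" and E u v w
  assumes G: "good V E" and uvE: "{u,v} \<in> E" and uv_ne: "u \<noteq> v" and wV: "w \<notin> V"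
begin

definition "V' = insert w V"
definition "E' = (E - {{u,v}}) \<union> {{u,w},{w,v}}"

lemma g: "graph V E" and tf: "triangle_free V E" and c: "connected_graph V E"
  and nsc: "\<not> has_full_star_cutset V E" and np: "\<not> (is_path_graph V E \<and> card V \<le> 4)"
  using G by (auto simp: good_def)

lemma uv: "adj E u v" using uvE uv_ne by (simp add: adj_def)
lemma uV: "u \<in> V" "v \<in> V" using graph_adjD[OF g uv] by auto
lemma wne: "w \<noteq> u" "w \<noteq> v" using uV wV by auto
lemma noadjw: "\<not> adj E x w" "\<not> adj E w x" using graph_adjD[OF g, of x w] graph_adjD[OF g, of w x] wV by auto

lemma adjE': "adj E' x y \<longleftrightarrow> (adj E x y \<and> \<not>(x = u \<and> y = v) \<and> \<not>(x = v \<and> y = u))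
   \<or> (x = u \<and> y = w) \<or> (x = w \<and> y = u) \<or> (x = w \<and> y = v) \<or> (x = v \<and> y = w)"
  using wne uv_ne unfolding E'_def adj_def by (auto simp: doubleton_eq_iff)

lemma graph': "graph V' E'"
  using g uV wne unfolding graph_def V'_def E'_def by blast

lemma card': "card V' = Suc (card V)"
  using g wV by (simp add: V'_def graph_def)

lemma lift_step: "adj E a b \<Longrightarrow> (adj E')\<^sup>*\<^sup>* a b"
proof -
  assume ab: "adj E a b"
  show ?thesis
  proof (cases "(a = u \<and> b = v) \<or> (a = v \<and> b = u)")
    case True
    then show ?thesis
    proof
      assume "a = u \<and> b = v"
      then show ?thesis using adjE'[of u w] adjE'[of w v]
        by (metis r_into_rtranclp rtranclp.rtrancl_into_rtrancl)
    next
      assume "a = v \<and> b = u"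
      then show ?thesis using adjE'[of v w] adjE'[of w u]
        by (metis r_into_rtranclp rtranclp.rtrancl_into_rtrancl)
    qed
  next
    case False then show ?thesis using ab adjE' by auto
  qed
qed

lemma connected': "connected_graph V' E'"
proof -
  have cE: "(adj E)\<^sup>*\<^sup>* x y" if "x \<in> V" "y \<in> V" for x y using c that by (auto simp: connected_graph_def)
  have cE': "(adj E')\<^sup>*\<^sup>* x y" if "x \<in> V" "y \<in> V" for x y
    using rtranclp_lift[OF lift_step cE[OF that]] .
  have wu: "adj E' w u" "adj E' u w" using adjE' by auto
  have s: "(adj E')\<^sup>*\<^sup>* x u" if "x \<in> V'" for x
    using that cE'[OF _ uV(1)] wu unfolding V'_def by auto
  have s2: "(adj E')\<^sup>*\<^sup>* u x" if "x \<in> V'" for x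
    using that cE'[OF uV(1)] wu unfolding V'_def by auto
  show ?thesis unfolding connected_graph_def V'_def using s s2 V'_def
    by (metis empty_not_insert rtranclp_trans)
qed

lemma tf': "triangle_free V' E'"
  unfolding triangle_free_def
proof clarify
  fix x y z assume "x \<in> V'" "y \<in> V'" "z \<in> V'" and a: "adj E' x y" "adj E' y z" "adj E' x z"
  show False using a unfolding adjE'
    using uv_ne wne by (auto simp: noadjw dest: tfD[OF g tf])
qed


lemma ind_eq: "w \<notin> T \<Longrightarrow> \<not>(u \<in> T \<and> v \<in> T) \<Longrightarrow> adj (induced_edges E' T) = adj (induced_edges E T)"
  by (auto simp: adj_induced adjE' fun_eq_iff)

lemma lift_ind: "(adj (induced_edges E T))\<^sup>*\<^sup>* a b \<Longrightarrow> (adj (induced_edges E' (insert w T)))\<^sup>*\<^sup>* a b"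
proof (erule rtranclp_lift[rotated])
  fix p q assume "adj (induced_edges E T) p q"
  then have pq: "adj E p q" "p \<in> T" "q \<in> T" by (auto simp: adj_induced)
  show "(adj (induced_edges E' (insert w T)))\<^sup>*\<^sup>* p q"
  proof (cases "(p = u \<and> q = v) \<or> (p = v \<and> q = u)")
    case True
    then show ?thesis
    proof
      assume "p = u \<and> q = v"
      then show ?thesis using adjE'[of u w] adjE'[of w v] pq
        by (metis (no_types, lifting) adj_induced insertCI r_into_rtranclp rtranclp.rtrancl_into_rtrancl)
    next
      assume "p = v \<and> q = u"
      then show ?thesis using adjE'[of v w] adjE'[of w u] pq
        by (metis (no_types, lifting) adj_induced insertCI r_into_rtranclp rtranclp.rtrancl_into_rtrancl)
    qed
  next
    case False then show ?thesis using pq adjE' by (auto simp: adj_induced intro!: r_into_rtranclp)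
  qed
qed

lemma Dw: "V' - closed_nbhd V' E' w = V - {u,v}"
  unfolding V'_def closed_nbhd_def using adjE' wne uV wV noadjw by auto

lemma Du: "V' - closed_nbhd V' E' u = insert v (V - closed_nbhd V E u)"
  unfolding V'_def closed_nbhd_def using adjE' wne uV uv_ne noadjw wV by auto

lemma Dv: "V' - closed_nbhd V' E' v = insert u (V - closed_nbhd V E v)"
  unfolding V'_def closed_nbhd_def using adjE' wne uV uv_ne noadjw wV by auto

lemma Dx: "x \<in> V \<Longrightarrow> x \<noteq> u \<Longrightarrow> x \<noteq> v \<Longrightarrow> V' - closed_nbhd V' E' x = insert w (V - closed_nbhd V E x)"
  unfolding V'_def closed_nbhd_def using adjE' wne uV uv_ne noadjw wV by auto

lemma nsc': "\<not> has_full_star_cutset V' E'"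
  unfolding nsc_iff
proof (intro ballI)
  fix x a b assume x: "x \<in> V'" and a: "a \<in> V' - closed_nbhd V' E' x" and b: "b \<in> V' - closed_nbhd V' E' x"
  consider "x = w" | "x = u" | "x = v" | "x \<in> V" "x \<noteq> u" "x \<noteq> v" using x unfolding V'_def by auto
  then show "(adj (induced_edges E' (V' - closed_nbhd V' E' x)))\<^sup>*\<^sup>* a b"
  proof cases
    case 1
    have "adj (induced_edges E' (V - {u,v})) = adj (induced_edges E (V - {u,v}))"
      by (rule ind_eq) (use wV in auto)
    then show ?thesis using edge_removal[OF G uv] a b unfolding 1 Dw by simp
  next
    case 2
    have "adj (induced_edges E' (insert v (V - closed_nbhd V E u))) = adj (induced_edges E (insert v (V - closed_nbhd V E u)))"
      by (rule ind_eq) (use wV wne uv_ne in \<open>auto simp: cn_iff\<close>)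
    then show ?thesis using after_u[OF G uv] a b unfolding 2 Du by simp
  next
    case 3
    have vu: "adj E v u" using uv by (simp add: adj_sym)
    have "adj (induced_edges E' (insert u (V - closed_nbhd V E v))) = adj (induced_edges E (insert u (V - closed_nbhd V E v)))"
      by (rule ind_eq) (use wV wne uv_ne in \<open>auto simp: cn_iff\<close>)
    then show ?thesis using after_u[OF G vu] a b unfolding 3 Dv by simp
  next
    case 4
    let ?T = "V - closed_nbhd V E x"
    note nscE = nsc[unfolded nsc_iff, rule_format, OF 4(1)]
    obtain cc where cc: "cc \<in> ?T" "cc = u \<or> cc = v"
    proof (cases "u \<in> closed_nbhd V E x")
      case False then show ?thesis using that uV by auto
    next
      case True
      then have "adj E x u" using 4 by (auto simp: cn_iff)
      then have "\<not> adj E x v" using tfD[OF g tf _ uv] by blast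
      then show ?thesis using that uV 4 by (auto simp: cn_iff)
    qed
    have toc: "(adj (induced_edges E' (insert w ?T)))\<^sup>*\<^sup>* z cc" if z: "z \<in> insert w ?T" for z
    proof (cases "z = w")
      case True
      have "adj (induced_edges E' (insert w ?T)) w cc" using cc adjE' by (auto simp: adj_induced)
      then show ?thesis using True by simp
    next
      case False
      then show ?thesis using lift_ind[OF nscE[of z cc]] z cc by auto
    qed
    show ?thesis unfolding Dx[OF 4] using toc[of a] ind_symm[OF toc[of b]] a b
      unfolding Dx[OF 4] by (meson rtranclp_trans)
  qed
qed

lemma np': "\<not> (is_path_graph V' E' \<and> card V' \<le> 4)"
proof
  assume a: "is_path_graph V' E' \<and> card V' \<le> 4"
  then have "card V \<le> 3" using card' by simp
  then show False using small_path[OF g c tf] np by blast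
qed

lemma good': "good (insert w V) ((E - {{u,v}}) \<union> {{u,w},{w,v}})"
  using graph' connected' tf' nsc' np' unfolding good_def V'_def E'_def by blast

end


lemma sub_good: "subdivision V E V' E' \<Longrightarrow> good V E \<Longrightarrow> good V' E'"
proof (induction rule: subdivision.induct)
  case refl then show ?case .
next
  case (step V' E' u v w)
  then have "good V' E'" by simp
  then interpret sstep V' E' u v w using step by unfold_locales auto
  show ?case by (rule good')
qed

theorem mainTheorem18:
  fixes V :: "'a set" and E :: "'a set set"
  assumes "graph V E"
    and "connected_graph V E"
    and "triangle_free V E"
    and "\<not> has_full_star_cutset V E"
    and "\<not> (is_path_graph V E \<and> card V \<le> 4)"
    and "subdivision V E V' E'"
  shows "connected_graph V' E' \<and> triangle_free V' E' \<and> \<not> has_full_star_cutset V' E'"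
proof -
  have "good V E" using assms by (simp add: good_def)
  then have "good V' E'" using sub_good assms(6) by blast
  then show ?thesis by (simp add: good_def)
qed


end
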